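(* Let $X\subset\mathbb{R}^n$ be nonempty convex compact with $\|x_1-x_2\|_2\le D_X$, $c\in(0,1]$, $f(x)=\mathbb{E}[F(x,\xi)]$ $L_f$-Lipschitz on $X$, with oracle samples satisfying $\mathbb{E}\|F'(x,\xi)-f'(x)\|_2^2\le\sigma_f^2$ and $\mathbb{E}[(F(x,\xi)-f(x))^2]\le\beta^2$. Let $\delta>0$ and let $Y_\delta\subset\mathbb{R}$ be an interval of length $2(L_fD_X+\delta)$ such that $f(x)\in Y_\delta$ for all $x\in X$; let $\Lambda=[0,1]$. For $z>0$ define $\mathcal{L}'_x=\frac{2c}{z}(F(x,\xi)-y)_+F'(x,\xi)+\lambda F'(x,\xi)$, $\mathcal{L}'_y=-\frac{2c}{z}(F(x,\xi)-y)_++1-\lambda$, $\mathcal{L}'_z=-\frac c{z^2}(F(x,\xi)-y)_+^2+\frac c4$, $\mathcal{L}'_\lambda=F(x,\xi)-y$. Then for any $x\in X$, $y\in Y_\delta$, $z>0$, $\lambda\in\Lambda$: (a) $\mathbb{E}[(\mathcal{L}'_y)^2]\le\frac{12c^2}{z^2}[\beta^2+4(L_fD_X+\delta)^2]+3$; (b) $\mathbb{E}[(\mathcal{L}'_\lambda)^2]\le2\beta^2+8(L_fD_X+\delta)^2$; if moreover $\mathbb{E}[(F(x,\xi)-f(x))_+^4]\le M_f^4$ for all $x\in X$, then (d) $\mathbb{E}[(\mathcal{L}'_z)^2]\le\frac{12c^2}{z^4}[M_f^4+16(L_fD_X+\delta)^4]+\frac{3c^2}{16}$; and if, with $G(x,\xi)=(F(x,\xi)-f(x))_+^2$,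 $\mathbb{E}\|G'(x,\xi)\|_2^2\le L_G^2$ for all $x\in X$, then (c) $\mathbb{E}\|\mathcal{L}'_x\|_2^2\le\frac{3c^2}{z^2}[L_G^2+4L_f^2\beta^2+64(L_f^2+\sigma_f^2)(L_fD_X+\delta)^2]+12(L_f^2+\sigma_f^2)$.
   Context: $(a)_+=\max\{a,0\}$. $F(\cdot,\xi)$ is convex; $F'(x,\xi)$ is a stochastic subgradient returned by an oracle, unbiased for a subgradient $f'(x)$ of $f$; $F(x,\xi)$ is unbiased for $f(x)$.
   Formalization: The subgradient f'(x) has norm at most $L_f$ for every x in X, and $G'(x,\xi)$ in (c) is $2(F(x,\xi)-f(x))_+(F'(x,\xi)-f'(x))$. The paper assumes this as well. *)

theory Defs
  imports "HOL-Probability.Probability"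
begin

definition pos_part :: "real \<Rightarrow> real" where
  "pos_part a = max a 0"

text \<open>Stochastic partial derivatives of the Lagrangian, as in the paper.
  Fx = F(x,xi), Fx' = F'(x,xi).\<close>
definition Lx' :: "real \<Rightarrow> real \<Rightarrow> real \<Rightarrow> real \<Rightarrow> real \<Rightarrow> 'v::real_vector \<Rightarrow> 'v" where
  "Lx' c y z lam Fx Fx' = (2 * c / z * pos_part (Fx - y)) *\<^sub>R Fx' + lam *\<^sub>R Fx'"

definition Ly' :: "real \<Rightarrow> real \<Rightarrow> real \<Rightarrow> real \<Rightarrow> real \<Rightarrow> real" where
  "Ly' c y z lam Fx = - (2 * c / z) * pos_part (Fx - y) + 1 - lam"

definition Lz' :: "real \<Rightarrow> real \<Rightarrow> real \<Rightarrow> real \<Rightarrow> real" where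
  "Lz' c y z Fx = - (c / z^2) * (pos_part (Fx - y))^2 + c / 4"

definition Llam' :: "real \<Rightarrow> real \<Rightarrow> real" where
  "Llam' y Fx = Fx - y"

text \<open>Stochastic (sub)gradient of G(x,xi) = (F(x,xi) - f(x))_+^2 by the chain rule:
  G'(x,xi) = 2 (F(x,xi) - f(x))_+ (F'(x,xi) - f'(x)).\<close>
definition Gprime :: "real \<Rightarrow> real \<Rightarrow> 'v::real_vector \<Rightarrow> 'v \<Rightarrow> 'v" where
  "Gprime Fx fx Fx' fx' = (2 * pos_part (Fx - fx)) *\<^sub>R (Fx' - fx')"

end

theory Submission imports Defs begin

lemma integ_bound:
  fixes M :: "'a measure"
  assumes P: "prob_space M"
    and m1: "g1 \<in> borel_measurable M" and m2: "g2 \<in> borel_measurable M" and m3: "g3 \<in> borel_measurable M"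
    and n1: "\<And>\<xi>. 0 \<le> g1 \<xi>" and n2: "\<And>\<xi>. 0 \<le> g2 \<xi>" and n3: "\<And>\<xi>. 0 \<le> g3 \<xi>"
    and A: "0 \<le> A" and B: "0 \<le> B" and C: "0 \<le> C" and D: "0 \<le> D"
    and pt: "\<And>\<xi>. \<xi> \<in> space M \<Longrightarrow> h \<xi> \<le> A * g1 \<xi> + B * g2 \<xi> + C * g3 \<xi> + D"
    and i1: "(\<integral>\<^sup>+\<xi>. ennreal (g1 \<xi>) \<partial>M) \<le> ennreal b1"
    and i2: "(\<integral>\<^sup>+\<xi>. ennreal (g2 \<xi>) \<partial>M) \<le> ennreal b2"
    and i3: "(\<integral>\<^sup>+\<xi>. ennreal (g3 \<xi>) \<partial>M) \<le> ennreal b3"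
    and b1: "0 \<le> b1" and b2: "0 \<le> b2" and b3: "0 \<le> b3"
  shows "(\<integral>\<^sup>+\<xi>. ennreal (h \<xi>) \<partial>M) \<le> ennreal (A * b1 + B * b2 + C * b3 + D)"
proof -
  have "(\<integral>\<^sup>+\<xi>. ennreal (h \<xi>) \<partial>M) \<le> (\<integral>\<^sup>+\<xi>. (ennreal A * ennreal (g1 \<xi>) + ennreal B * ennreal (g2 \<xi>)) + (ennreal C * ennreal (g3 \<xi>) + ennreal D) \<partial>M)"
  proof (rule nn_integral_mono)
    fix \<xi> assume "\<xi> \<in> space M"
    then have "ennreal (h \<xi>) \<le> ennreal (A * g1 \<xi> + B * g2 \<xi> + C * g3 \<xi> + D)"
      using pt by (intro ennreal_leI) auto
    also have "\<dots> = (ennreal A * ennreal (g1 \<xi>) + ennreal B * ennreal (g2 \<xi>)) + (ennreal C * ennreal (g3 \<xi>) + ennreal D)"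
      using n1[of \<xi>] n2[of \<xi>] n3[of \<xi>] A B C D
      by (simp del: ennreal_plus add: ennreal_plus[symmetric] ennreal_mult[symmetric] add.assoc)
    finally show "ennreal (h \<xi>) \<le> (ennreal A * ennreal (g1 \<xi>) + ennreal B * ennreal (g2 \<xi>)) + (ennreal C * ennreal (g3 \<xi>) + ennreal D)" .
  qed
  also have "\<dots> = (\<integral>\<^sup>+\<xi>. (ennreal A * ennreal (g1 \<xi>) + ennreal B * ennreal (g2 \<xi>)) \<partial>M) + (\<integral>\<^sup>+\<xi>. (ennreal C * ennreal (g3 \<xi>) + ennreal D) \<partial>M)"
    using m1 m2 m3 by (intro nn_integral_add) auto
  also have "\<dots> = (ennreal A * (\<integral>\<^sup>+\<xi>. ennreal (g1 \<xi>) \<partial>M) + ennreal B * (\<integral>\<^sup>+\<xi>. ennreal (g2 \<xi>) \<partial>M))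
      + (ennreal C * (\<integral>\<^sup>+\<xi>. ennreal (g3 \<xi>) \<partial>M) + ennreal D)"
    using m1 m2 m3 prob_space.emeasure_space_1[OF P]
    by (simp add: nn_integral_add nn_integral_cmult)
  also have "\<dots> \<le> (ennreal A * ennreal b1 + ennreal B * ennreal b2) + (ennreal C * ennreal b3 + ennreal D)"
    using i1 i2 i3 by (intro add_mono mult_left_mono order_refl) auto
  also have "\<dots> = ennreal (A * b1 + B * b2 + C * b3 + D)"
    using A B C D b1 b2 b3 by (simp del: ennreal_plus add: ennreal_plus[symmetric] ennreal_mult[symmetric] add.assoc)
  finally show ?thesis .
qed

lemma pp_nonneg: "0 \<le> pos_part a" by (simp add: pos_part_def)
lemma pp_le_abs: "pos_part a \<le> \<bar>a\<bar>" by (simp add: pos_part_def)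
lemma pp_sq_le: "(pos_part a)\<^sup>2 \<le> a\<^sup>2"
  by (metis abs_le_square_iff abs_of_nonneg pp_le_abs pp_nonneg)
lemma pp_shift: "\<bar>fx - y\<bar> \<le> K2 \<Longrightarrow> pos_part (u - y) \<le> pos_part (u - fx) + K2"
  by (simp add: pos_part_def)

lemma sq_sum2: "(a + b)\<^sup>2 \<le> 2 * (a::real)\<^sup>2 + 2 * b\<^sup>2"
proof -
  have "0 \<le> (a - b)\<^sup>2" by simp
  then show ?thesis by (simp add: power2_eq_square algebra_simps)
qed

lemma sq_diff01: "0 \<le> (A::real) \<Longrightarrow> 0 \<le> B \<Longrightarrow> B \<le> 1 \<Longrightarrow> (B - A)\<^sup>2 \<le> A\<^sup>2 + 1"
proof -
  assume "0 \<le> A" "0 \<le> B" "B \<le> 1"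
  then have "B * B \<le> 1" "0 \<le> A * B" by (simp_all add: mult_le_one)
  then show ?thesis by (simp add: power2_eq_square algebra_simps)
qed

lemma sq_diff2: "0 \<le> (A::real) \<Longrightarrow> 0 \<le> B \<Longrightarrow> (B - A)\<^sup>2 \<le> A\<^sup>2 + B\<^sup>2"
proof -
  assume "0 \<le> A" "0 \<le> B"
  then have "0 \<le> A * B" by simp
  then show ?thesis by (simp add: power2_eq_square algebra_simps)
qed

lemma sq_sum4: "((a::real) + b + d + g)\<^sup>2 \<le> 3 * a\<^sup>2 + 3 * b\<^sup>2 + 6 * d\<^sup>2 + 6 * g\<^sup>2"
proof -
  have "0 \<le> (a + b - 2 * (d + g))\<^sup>2" "0 \<le> (a - b)\<^sup>2" "0 \<le> (d - g)\<^sup>2" by simp_all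
  then show ?thesis by (simp add: power2_eq_square algebra_simps)
qed

theorem lemma4:
  fixes M :: "'a measure"
    and X :: "(real ^ 'n) set"
    and F :: "real ^ 'n \<Rightarrow> 'a \<Rightarrow> real"
    and F' :: "real ^ 'n \<Rightarrow> 'a \<Rightarrow> real ^ 'n"
    and f :: "real ^ 'n \<Rightarrow> real"
    and f' :: "real ^ 'n \<Rightarrow> real ^ 'n"
    and D_X c L_f sigma_f beta delta a :: real
    and Y :: "real set"
    and x :: "real ^ 'n" and y z lam :: real
  assumes P: "prob_space M"
    and X: "X \<noteq> {}" "convex X" "compact X"
    and diam: "\<forall>x1\<in>X. \<forall>x2\<in>X. norm (x1 - x2) \<le> D_X"
    and c: "0 < c" "c \<le> 1"
    and Fconv: "\<forall>\<xi>\<in>space M. convex_on UNIV (\<lambda>u. F u \<xi>)"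
    and Fint: "\<forall>u\<in>X. integrable M (F u)"
    and F'int: "\<forall>u\<in>X. integrable M (F' u)"
    and f_def: "\<forall>u\<in>X. f u = (\<integral>\<xi>. F u \<xi> \<partial>M)"
    and f'_def: "\<forall>u\<in>X. f' u = (\<integral>\<xi>. F' u \<xi> \<partial>M)"
    and f'_subgrad: "\<forall>u\<in>X. \<forall>v\<in>X. f v \<ge> f u + inner (f' u) (v - u)"
    and f'_bound: "\<forall>u\<in>X. norm (f' u) \<le> L_f"
    and Lip: "L_f-lipschitz_on X f"
    and sigma: "\<forall>u\<in>X. (\<integral>\<^sup>+\<xi>. ennreal ((norm (F' u \<xi> - f' u))\<^sup>2) \<partial>M) \<le> ennreal (sigma_f\<^sup>2)"
    and beta: "\<forall>u\<in>X. (\<integral>\<^sup>+\<xi>. ennreal ((F u \<xi> - f u)\<^sup>2) \<partial>M) \<le> ennreal (beta\<^sup>2)"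
    and delta: "delta > 0"
    and Y: "Y = {a .. a + 2 * (L_f * D_X + delta)}"
    and fY: "\<forall>u\<in>X. f u \<in> Y"
    and x: "x \<in> X" and y: "y \<in> Y" and z: "z > 0" and lam: "lam \<in> {0..1}"
  shows
    "(\<integral>\<^sup>+\<xi>. ennreal ((Ly' c y z lam (F x \<xi>))\<^sup>2) \<partial>M)
        \<le> ennreal (12 * c\<^sup>2 / z\<^sup>2 * (beta\<^sup>2 + 4 * (L_f * D_X + delta)\<^sup>2) + 3)
     \<and> (\<integral>\<^sup>+\<xi>. ennreal ((Llam' y (F x \<xi>))\<^sup>2) \<partial>M)
        \<le> ennreal (2 * beta\<^sup>2 + 8 * (L_f * D_X + delta)\<^sup>2)
     \<and> (\<forall>M_f::real.
          (\<forall>u\<in>X. (\<integral>\<^sup>+\<xi>. ennreal ((pos_part (F u \<xi> - f u)) ^ 4) \<partial>M) \<le> ennreal (M_f ^ 4))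
          \<longrightarrow> (\<integral>\<^sup>+\<xi>. ennreal ((Lz' c y z (F x \<xi>))\<^sup>2) \<partial>M)
              \<le> ennreal (12 * c\<^sup>2 / z ^ 4 * (M_f ^ 4 + 16 * (L_f * D_X + delta) ^ 4) + 3 * c\<^sup>2 / 16))
     \<and> (\<forall>L_G::real.
          (\<forall>u\<in>X. (\<integral>\<^sup>+\<xi>. ennreal ((norm (Gprime (F u \<xi>) (f u) (F' u \<xi>) (f' u)))\<^sup>2) \<partial>M)
                   \<le> ennreal (L_G\<^sup>2))
          \<longrightarrow> (\<integral>\<^sup>+\<xi>. ennreal ((norm (Lx' c y z lam (F x \<xi>) (F' x \<xi>)))\<^sup>2) \<partial>M)
              \<le> ennreal (3 * c\<^sup>2 / z\<^sup>2 * (L_G\<^sup>2 + 4 * L_f\<^sup>2 * beta\<^sup>2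
                          + 64 * (L_f\<^sup>2 + sigma_f\<^sup>2) * (L_f * D_X + delta)\<^sup>2)
                        + 12 * (L_f\<^sup>2 + sigma_f\<^sup>2)))"
proof -
  have Lf0: "0 \<le> L_f" using f'_bound x by (meson norm_ge_zero order_trans)
  have DX0: "0 \<le> D_X" using diam x by force
  define K where "K = L_f * D_X + delta"
  have K0: "0 < K" unfolding K_def using Lf0 DX0 delta by (simp add: add_nonneg_pos)
  have fy: "\<bar>f x - y\<bar> \<le> 2 * K" using fY x y unfolding Y K_def by auto
  have mF[measurable]: "F x \<in> borel_measurable M" using Fint x by (simp add: borel_measurable_integrable)
  have mF'[measurable]: "F' x \<in> borel_measurable M" using F'int x by (simp add: borel_measurable_integrable)
  have z2: "0 < z\<^sup>2" using z by simp
  have mB0: "(\<lambda>\<xi>. (F x \<xi> - f x)\<^sup>2) \<in> borel_measurable M" by measurable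
  have mZ: "(\<lambda>\<xi>. 0::real) \<in> borel_measurable M" by simp
  have mQ: "(\<lambda>\<xi>. pos_part (F x \<xi> - f x) ^ 4) \<in> borel_measurable M" unfolding pos_part_def by measurable
  have c2: "0 \<le> c\<^sup>2" by simp
  have PP: "pos_part (F x \<xi> - y) \<le> \<bar>F x \<xi> - f x\<bar> + 2 * K" for \<xi>
    using pp_shift[OF fy, of "F x \<xi>"] pp_le_abs[of "F x \<xi> - f x"] by linarith
  have PP': "pos_part (F x \<xi> - y) \<le> pos_part (F x \<xi> - f x) + 2 * K" for \<xi>
    using pp_shift[OF fy, of "F x \<xi>"] .
  have zero: "(\<integral>\<^sup>+\<xi>. ennreal ((\<lambda>_. 0::real) \<xi>) \<partial>M) \<le> ennreal 0" by simp
  have betax: "(\<integral>\<^sup>+\<xi>. ennreal ((F x \<xi> - f x)\<^sup>2) \<partial>M) \<le> ennreal (beta\<^sup>2)" using beta x by blast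
  have partA: "(\<integral>\<^sup>+\<xi>. ennreal ((Ly' c y z lam (F x \<xi>))\<^sup>2) \<partial>M)
        \<le> ennreal (12 * c\<^sup>2 / z\<^sup>2 * (beta\<^sup>2 + 4 * (L_f * D_X + delta)\<^sup>2) + 3)"
  proof -
    define t where "t = 2 * c / z"
    have t0: "0 \<le> t" unfolding t_def using c z by simp
    have pt: "(Ly' c y z lam (F x \<xi>))\<^sup>2 \<le> (12 * c\<^sup>2 / z\<^sup>2) * (F x \<xi> - f x)\<^sup>2 + 0 * 0 + 0 * 0 + (48 * c\<^sup>2 / z\<^sup>2 * K\<^sup>2 + 3)" for \<xi>
    proof -
      let ?P = "pos_part (F x \<xi> - y)"
      have "(Ly' c y z lam (F x \<xi>))\<^sup>2 = ((1 - lam) - t * ?P)\<^sup>2" unfolding Ly'_def t_def by (simp add: algebra_simps)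
      also have "\<dots> \<le> (t * ?P)\<^sup>2 + 1" using lam t0 pp_nonneg by (intro sq_diff01) auto
      also have "(t * ?P)\<^sup>2 \<le> (t * (\<bar>F x \<xi> - f x\<bar> + 2 * K))\<^sup>2"
        using t0 pp_nonneg PP by (intro power_mono mult_left_mono) auto
      also have "\<dots> = t\<^sup>2 * (\<bar>F x \<xi> - f x\<bar> + 2 * K)\<^sup>2" by (simp add: power_mult_distrib)
      also have "\<dots> \<le> t\<^sup>2 * (2 * (\<bar>F x \<xi> - f x\<bar>)\<^sup>2 + 2 * (2 * K)\<^sup>2)" by (intro mult_left_mono sq_sum2) auto
      also have "\<dots> = (8 * c\<^sup>2 / z\<^sup>2) * (F x \<xi> - f x)\<^sup>2 + 32 * c\<^sup>2 / z\<^sup>2 * K\<^sup>2"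
        unfolding t_def by (simp add: power_mult_distrib power_divide algebra_simps)
      finally have "(Ly' c y z lam (F x \<xi>))\<^sup>2 \<le> (8 * c\<^sup>2 / z\<^sup>2) * (F x \<xi> - f x)\<^sup>2 + 32 * c\<^sup>2 / z\<^sup>2 * K\<^sup>2 + 1" by simp
      moreover have "(8 * c\<^sup>2 / z\<^sup>2) * (F x \<xi> - f x)\<^sup>2 \<le> (12 * c\<^sup>2 / z\<^sup>2) * (F x \<xi> - f x)\<^sup>2"
        using z2 by (intro mult_right_mono divide_right_mono) auto
      moreover have "32 * c\<^sup>2 / z\<^sup>2 * K\<^sup>2 \<le> 48 * c\<^sup>2 / z\<^sup>2 * K\<^sup>2"
        using z2 by (intro mult_right_mono divide_right_mono) auto
      ultimately show ?thesis by simp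
    qed
    have "(\<integral>\<^sup>+\<xi>. ennreal ((Ly' c y z lam (F x \<xi>))\<^sup>2) \<partial>M) \<le> ennreal ((12 * c\<^sup>2 / z\<^sup>2) * beta\<^sup>2 + 0 * 0 + 0 * 0 + (48 * c\<^sup>2 / z\<^sup>2 * K\<^sup>2 + 3))"
      by (rule integ_bound[OF P mB0 mZ mZ _ _ _ _ _ _ _ pt betax zero zero]) (use z2 in simp_all)
    also have "\<dots> = ennreal (12 * c\<^sup>2 / z\<^sup>2 * (beta\<^sup>2 + 4 * (L_f * D_X + delta)\<^sup>2) + 3)"
      unfolding K_def by (simp add: algebra_simps)
    finally show ?thesis .
  qed

  have partB: "(\<integral>\<^sup>+\<xi>. ennreal ((Llam' y (F x \<xi>))\<^sup>2) \<partial>M)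
        \<le> ennreal (2 * beta\<^sup>2 + 8 * (L_f * D_X + delta)\<^sup>2)"
  proof -
    have fy2: "(f x - y)\<^sup>2 \<le> (2 * K)\<^sup>2"
      using fy K0 by (metis abs_le_square_iff abs_of_pos mult_pos_pos zero_less_numeral)
    have pt: "(Llam' y (F x \<xi>))\<^sup>2 \<le> 2 * (F x \<xi> - f x)\<^sup>2 + 0 * 0 + 0 * 0 + 8 * K\<^sup>2" for \<xi>
    proof -
      have "(Llam' y (F x \<xi>))\<^sup>2 = ((F x \<xi> - f x) + (f x - y))\<^sup>2" unfolding Llam'_def by simp
      also have "\<dots> \<le> 2 * (F x \<xi> - f x)\<^sup>2 + 2 * (f x - y)\<^sup>2" by (rule sq_sum2)
      finally show ?thesis using fy2 by (simp add: power_mult_distrib)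
    qed
    have "(\<integral>\<^sup>+\<xi>. ennreal ((Llam' y (F x \<xi>))\<^sup>2) \<partial>M) \<le> ennreal (2 * beta\<^sup>2 + 0 * 0 + 0 * 0 + 8 * K\<^sup>2)"
      by (rule integ_bound[OF P mB0 mZ mZ _ _ _ _ _ _ _ pt betax zero zero]) (use z2 in simp_all)
    then show ?thesis unfolding K_def by simp
  qed
  have partD: "(\<forall>M_f::real.
          (\<forall>u\<in>X. (\<integral>\<^sup>+\<xi>. ennreal ((pos_part (F u \<xi> - f u)) ^ 4) \<partial>M) \<le> ennreal (M_f ^ 4))
          \<longrightarrow> (\<integral>\<^sup>+\<xi>. ennreal ((Lz' c y z (F x \<xi>))\<^sup>2) \<partial>M)
              \<le> ennreal (12 * c\<^sup>2 / z ^ 4 * (M_f ^ 4 + 16 * (L_f * D_X + delta) ^ 4) + 3 * c\<^sup>2 / 16))"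
  proof (intro allI impI)
    fix M_f :: real
    assume hM: "\<forall>u\<in>X. (\<integral>\<^sup>+\<xi>. ennreal ((pos_part (F u \<xi> - f u)) ^ 4) \<partial>M) \<le> ennreal (M_f ^ 4)"
    then have hMx: "(\<integral>\<^sup>+\<xi>. ennreal ((pos_part (F x \<xi> - f x)) ^ 4) \<partial>M) \<le> ennreal (M_f ^ 4)" using x by blast
    have z4: "0 < z ^ 4" using z by simp
    have pt: "(Lz' c y z (F x \<xi>))\<^sup>2 \<le> (12 * c\<^sup>2 / z ^ 4) * (pos_part (F x \<xi> - f x)) ^ 4 + 0 * 0 + 0 * 0 + (192 * c\<^sup>2 / z ^ 4 * K ^ 4 + 3 * c\<^sup>2 / 16)" for \<xi>
    proof -
      let ?P = "pos_part (F x \<xi> - y)"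
      let ?q = "pos_part (F x \<xi> - f x)"
      have q0: "0 \<le> ?q" by (rule pp_nonneg)
      have "(Lz' c y z (F x \<xi>))\<^sup>2 = (c / 4 - c / z\<^sup>2 * ?P\<^sup>2)\<^sup>2" unfolding Lz'_def by (simp add: algebra_simps)
      also have "\<dots> \<le> (c / z\<^sup>2 * ?P\<^sup>2)\<^sup>2 + (c / 4)\<^sup>2" using c z by (intro sq_diff2) auto
      also have "(c / z\<^sup>2 * ?P\<^sup>2)\<^sup>2 = c\<^sup>2 / z ^ 4 * (?P\<^sup>2)\<^sup>2" by (simp add: power_mult_distrib power_divide flip: power_mult)
      finally have e1: "(Lz' c y z (F x \<xi>))\<^sup>2 \<le> c\<^sup>2 / z ^ 4 * (?P\<^sup>2)\<^sup>2 + (c / 4)\<^sup>2" .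
      have "(?P\<^sup>2)\<^sup>2 \<le> ((?q + 2 * K)\<^sup>2)\<^sup>2"
        using pp_nonneg PP' by (intro power_mono) auto
      also have "(?q + 2 * K)\<^sup>2 \<le> 2 * ?q\<^sup>2 + 2 * (2 * K)\<^sup>2" by (rule sq_sum2)
      hence "((?q + 2 * K)\<^sup>2)\<^sup>2 \<le> (2 * ?q\<^sup>2 + 2 * (2 * K)\<^sup>2)\<^sup>2" by (intro power_mono) auto
      also have "\<dots> \<le> 2 * (2 * ?q\<^sup>2)\<^sup>2 + 2 * (2 * (2 * K)\<^sup>2)\<^sup>2" by (rule sq_sum2)
      also have "\<dots> = 8 * ?q ^ 4 + 128 * K ^ 4" by (simp add: power_mult_distrib flip: power_mult)
      finally have e2: "(?P\<^sup>2)\<^sup>2 \<le> 8 * ?q ^ 4 + 128 * K ^ 4" .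
      have "c\<^sup>2 / z ^ 4 * (?P\<^sup>2)\<^sup>2 \<le> c\<^sup>2 / z ^ 4 * (8 * ?q ^ 4 + 128 * K ^ 4)"
        using e2 z4 by (intro mult_left_mono) auto
      with e1 have "(Lz' c y z (F x \<xi>))\<^sup>2 \<le> c\<^sup>2 / z ^ 4 * (8 * ?q ^ 4 + 128 * K ^ 4) + (c / 4)\<^sup>2"
        by linarith
      also have "\<dots> = (8 * c\<^sup>2 / z ^ 4) * ?q ^ 4 + 128 * c\<^sup>2 / z ^ 4 * K ^ 4 + c\<^sup>2 / 16"
        by (simp add: algebra_simps power_divide)
      also have "\<dots> \<le> (12 * c\<^sup>2 / z ^ 4) * ?q ^ 4 + 192 * c\<^sup>2 / z ^ 4 * K ^ 4 + 3 * c\<^sup>2 / 16"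
        using z4 q0 K0 by (intro add_mono mult_right_mono divide_right_mono) auto
      finally show ?thesis by simp
    qed
    have "(\<integral>\<^sup>+\<xi>. ennreal ((Lz' c y z (F x \<xi>))\<^sup>2) \<partial>M) \<le> ennreal ((12 * c\<^sup>2 / z ^ 4) * M_f ^ 4 + 0 * 0 + 0 * 0 + (192 * c\<^sup>2 / z ^ 4 * K ^ 4 + 3 * c\<^sup>2 / 16))"
      by (rule integ_bound[OF P mQ mZ mZ _ _ _ _ _ _ _ pt hMx zero zero]) (use z4 pp_nonneg in simp_all)
    also have "\<dots> = ennreal (12 * c\<^sup>2 / z ^ 4 * (M_f ^ 4 + 16 * (L_f * D_X + delta) ^ 4) + 3 * c\<^sup>2 / 16)"
      unfolding K_def by (simp add: algebra_simps)
    finally show "(\<integral>\<^sup>+\<xi>. ennreal ((Lz' c y z (F x \<xi>))\<^sup>2) \<partial>M)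
              \<le> ennreal (12 * c\<^sup>2 / z ^ 4 * (M_f ^ 4 + 16 * (L_f * D_X + delta) ^ 4) + 3 * c\<^sup>2 / 16)" .
  qed

  have partC: "(\<forall>L_G::real.
          (\<forall>u\<in>X. (\<integral>\<^sup>+\<xi>. ennreal ((norm (Gprime (F u \<xi>) (f u) (F' u \<xi>) (f' u)))\<^sup>2) \<partial>M)
                   \<le> ennreal (L_G\<^sup>2))
          \<longrightarrow> (\<integral>\<^sup>+\<xi>. ennreal ((norm (Lx' c y z lam (F x \<xi>) (F' x \<xi>)))\<^sup>2) \<partial>M)
              \<le> ennreal (3 * c\<^sup>2 / z\<^sup>2 * (L_G\<^sup>2 + 4 * L_f\<^sup>2 * beta\<^sup>2
                          + 64 * (L_f\<^sup>2 + sigma_f\<^sup>2) * (L_f * D_X + delta)\<^sup>2)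
                        + 12 * (L_f\<^sup>2 + sigma_f\<^sup>2)))"
  proof (intro allI impI)
    fix L_G :: real
    assume hG: "\<forall>u\<in>X. (\<integral>\<^sup>+\<xi>. ennreal ((norm (Gprime (F u \<xi>) (f u) (F' u \<xi>) (f' u)))\<^sup>2) \<partial>M)
                   \<le> ennreal (L_G\<^sup>2)"
    then have hGx: "(\<integral>\<^sup>+\<xi>. ennreal ((norm (Gprime (F x \<xi>) (f x) (F' x \<xi>) (f' x)))\<^sup>2) \<partial>M)
                   \<le> ennreal (L_G\<^sup>2)" using x by blast
    have sigx: "(\<integral>\<^sup>+\<xi>. ennreal ((norm (F' x \<xi> - f' x))\<^sup>2) \<partial>M) \<le> ennreal (sigma_f\<^sup>2)" using sigma x by blast
    have betax': "(\<integral>\<^sup>+\<xi>. ennreal ((F x \<xi> - f x)\<^sup>2) \<partial>M) \<le> ennreal (beta\<^sup>2)" by (rule betax)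
    define t where "t = 2 * c / z"
    have t0: "0 \<le> t" unfolding t_def using c z by simp
    have fL: "norm (f' x) \<le> L_f" using f'_bound x by blast
    have pt: "(norm (Lx' c y z lam (F x \<xi>) (F' x \<xi>)))\<^sup>2 \<le>
       (3 * c\<^sup>2 / z\<^sup>2) * (norm (Gprime (F x \<xi>) (f x) (F' x \<xi>) (f' x)))\<^sup>2
       + (12 * c\<^sup>2 / z\<^sup>2 * L_f\<^sup>2) * (F x \<xi> - f x)\<^sup>2
       + (192 * c\<^sup>2 / z\<^sup>2 * K\<^sup>2 + 12) * (norm (F' x \<xi> - f' x))\<^sup>2
       + (192 * c\<^sup>2 / z\<^sup>2 * K\<^sup>2 + 12) * L_f\<^sup>2" for \<xi>
    proof -
      let ?P = "pos_part (F x \<xi> - y)"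
      let ?q = "pos_part (F x \<xi> - f x)"
      let ?e = "norm (F' x \<xi> - f' x)"
      have q0: "0 \<le> ?q" and P0: "0 \<le> ?P" and e0: "0 \<le> ?e" by (simp_all add: pp_nonneg)
      have nF: "norm (F' x \<xi>) \<le> ?e + L_f"
        using norm_triangle_ineq[of "F' x \<xi> - f' x" "f' x"] fL by simp
      have "norm (Lx' c y z lam (F x \<xi>) (F' x \<xi>)) = (t * ?P + lam) * norm (F' x \<xi>)"
      proof -
        have nn: "0 \<le> t * ?P + lam" using t0 P0 lam by simp
        have "Lx' c y z lam (F x \<xi>) (F' x \<xi>) = (t * ?P + lam) *\<^sub>R F' x \<xi>"
          unfolding Lx'_def t_def by (simp add: scaleR_add_left)
        then show ?thesis using nn by simp
      qed
      also have "\<dots> \<le> (t * (?q + 2 * K) + 1) * (?e + L_f)"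
        using t0 P0 lam PP' nF q0 K0 by (intro mult_mono add_mono mult_left_mono) (auto intro!: add_nonneg_nonneg mult_nonneg_nonneg)
      also have "\<dots> = t * ?q * ?e + t * ?q * L_f + 2 * t * K * (?e + L_f) + (?e + L_f)"
        by (simp add: algebra_simps)
      finally have n1: "norm (Lx' c y z lam (F x \<xi>) (F' x \<xi>)) \<le> t * ?q * ?e + t * ?q * L_f + 2 * t * K * (?e + L_f) + (?e + L_f)" .
      have "(norm (Lx' c y z lam (F x \<xi>) (F' x \<xi>)))\<^sup>2 \<le> (t * ?q * ?e + t * ?q * L_f + 2 * t * K * (?e + L_f) + (?e + L_f))\<^sup>2"
        using n1 by (intro power_mono) auto
      also have "\<dots> \<le> 3 * (t * ?q * ?e)\<^sup>2 + 3 * (t * ?q * L_f)\<^sup>2 + 6 * (2 * t * K * (?e + L_f))\<^sup>2 + 6 * (?e + L_f)\<^sup>2"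
        by (rule sq_sum4)
      finally have s1: "(norm (Lx' c y z lam (F x \<xi>) (F' x \<xi>)))\<^sup>2 \<le> 3 * (t * ?q * ?e)\<^sup>2 + 3 * (t * ?q * L_f)\<^sup>2 + 6 * (2 * t * K * (?e + L_f))\<^sup>2 + 6 * (?e + L_f)\<^sup>2" .
      have s2: "3 * (t * ?q * ?e)\<^sup>2 = (3 * c\<^sup>2 / z\<^sup>2) * (norm (Gprime (F x \<xi>) (f x) (F' x \<xi>) (f' x)))\<^sup>2"
        unfolding Gprime_def t_def using q0 by (simp add: power_mult_distrib power_divide)
      have s3: "3 * (t * ?q * L_f)\<^sup>2 \<le> (12 * c\<^sup>2 / z\<^sup>2 * L_f\<^sup>2) * (F x \<xi> - f x)\<^sup>2"
      proof -
        have "3 * (t * ?q * L_f)\<^sup>2 = (3 * t\<^sup>2 * L_f\<^sup>2) * ?q\<^sup>2" by (simp add: power_mult_distrib)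
        also have "\<dots> \<le> (3 * t\<^sup>2 * L_f\<^sup>2) * (F x \<xi> - f x)\<^sup>2" by (intro mult_left_mono pp_sq_le) auto
        also have "3 * t\<^sup>2 * L_f\<^sup>2 = 12 * c\<^sup>2 / z\<^sup>2 * L_f\<^sup>2" unfolding t_def by (simp add: power_mult_distrib power_divide)
        finally show ?thesis .
      qed
      have s4: "6 * (2 * t * K * (?e + L_f))\<^sup>2 \<le> (192 * c\<^sup>2 / z\<^sup>2 * K\<^sup>2) * (?e\<^sup>2 + L_f\<^sup>2)"
      proof -
        have "6 * (2 * t * K * (?e + L_f))\<^sup>2 = (24 * t\<^sup>2 * K\<^sup>2) * (?e + L_f)\<^sup>2" by (simp add: power_mult_distrib)
        also have "\<dots> \<le> (24 * t\<^sup>2 * K\<^sup>2) * (2 * ?e\<^sup>2 + 2 * L_f\<^sup>2)" by (intro mult_left_mono sq_sum2) auto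
        also have "\<dots> = (192 * c\<^sup>2 / z\<^sup>2 * K\<^sup>2) * (?e\<^sup>2 + L_f\<^sup>2)" unfolding t_def by (simp add: power_mult_distrib power_divide algebra_simps)
        finally show ?thesis .
      qed
      have s5: "6 * (?e + L_f)\<^sup>2 \<le> 12 * (?e\<^sup>2 + L_f\<^sup>2)"
        using sq_sum2[of ?e L_f] by simp
      have fin: "(norm (Lx' c y z lam (F x \<xi>) (F' x \<xi>)))\<^sup>2 \<le> (3 * c\<^sup>2 / z\<^sup>2) * (norm (Gprime (F x \<xi>) (f x) (F' x \<xi>) (f' x)))\<^sup>2
       + (12 * c\<^sup>2 / z\<^sup>2 * L_f\<^sup>2) * (F x \<xi> - f x)\<^sup>2 + (192 * c\<^sup>2 / z\<^sup>2 * K\<^sup>2) * (?e\<^sup>2 + L_f\<^sup>2) + 12 * (?e\<^sup>2 + L_f\<^sup>2)"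
        using s1 s2 s3 s4 s5 by linarith
      have "(192 * c\<^sup>2 / z\<^sup>2 * K\<^sup>2) * (?e\<^sup>2 + L_f\<^sup>2) + 12 * (?e\<^sup>2 + L_f\<^sup>2)
         = (192 * c\<^sup>2 / z\<^sup>2 * K\<^sup>2 + 12) * ?e\<^sup>2 + (192 * c\<^sup>2 / z\<^sup>2 * K\<^sup>2 + 12) * L_f\<^sup>2"
        by (simp only: distrib_left distrib_right)
      with fin show ?thesis by linarith
    qed
    have "(\<integral>\<^sup>+\<xi>. ennreal ((norm (Lx' c y z lam (F x \<xi>) (F' x \<xi>)))\<^sup>2) \<partial>M) \<le>
        ennreal ((3 * c\<^sup>2 / z\<^sup>2) * L_G\<^sup>2 + (12 * c\<^sup>2 / z\<^sup>2 * L_f\<^sup>2) * beta\<^sup>2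
       + (192 * c\<^sup>2 / z\<^sup>2 * K\<^sup>2 + 12) * sigma_f\<^sup>2 + (192 * c\<^sup>2 / z\<^sup>2 * K\<^sup>2 + 12) * L_f\<^sup>2)"
    proof -
      have mG: "(\<lambda>\<xi>. (norm (Gprime (F x \<xi>) (f x) (F' x \<xi>) (f' x)))\<^sup>2) \<in> borel_measurable M"
        unfolding Gprime_def pos_part_def by measurable
      have mB: "(\<lambda>\<xi>. (F x \<xi> - f x)\<^sup>2) \<in> borel_measurable M" by measurable
      have mS: "(\<lambda>\<xi>. (norm (F' x \<xi> - f' x))\<^sup>2) \<in> borel_measurable M" by measurable
      show ?thesis
        by (rule integ_bound[OF P mG mB mS _ _ _ _ _ _ _ pt hGx betax' sigx]) simp_all
    qed
    also have "\<dots> = ennreal (3 * c\<^sup>2 / z\<^sup>2 * (L_G\<^sup>2 + 4 * L_f\<^sup>2 * beta\<^sup>2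
                          + 64 * (L_f\<^sup>2 + sigma_f\<^sup>2) * (L_f * D_X + delta)\<^sup>2)
                        + 12 * (L_f\<^sup>2 + sigma_f\<^sup>2))"
      unfolding K_def by (simp add: algebra_simps)
    finally show "(\<integral>\<^sup>+\<xi>. ennreal ((norm (Lx' c y z lam (F x \<xi>) (F' x \<xi>)))\<^sup>2) \<partial>M)
              \<le> ennreal (3 * c\<^sup>2 / z\<^sup>2 * (L_G\<^sup>2 + 4 * L_f\<^sup>2 * beta\<^sup>2
                          + 64 * (L_f\<^sup>2 + sigma_f\<^sup>2) * (L_f * D_X + delta)\<^sup>2)
                        + 12 * (L_f\<^sup>2 + sigma_f\<^sup>2))" .
  qed
  show ?thesis using partA partB partD partC by blast
qed

end
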